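(* In the pure Call-by-Name $\lambda$-calculus, let $\rightsquigarrow_U$ be the unbiased iteration of head reduction (as in the context). If $M\to_\beta M'$ and not $M\rightsquigarrow_UM'$, then $\omega(M)=\omega(M')$.
   Context: Pure $\lambda$-terms $M::=x\mid\lambda x.M\mid MM$; $\to_\beta$ is the closure of $(\lambda x.M)N\mapsto M\{N/x\}$ under all contexts. Head reduction $\to_h$ is the closure of $\beta$ under head contexts $H::=[\,]\mid\lambda x.H\mid HM$. $\rightsquigarrow_U$: if $M\to_hM'$ then $M\rightsquigarrow_UM'$; if $M$ is $\to_h$-normal: $\lambda x.P\rightsquigarrow_U\lambda x.P'$ if $P\rightsquigarrow_UP'$; $PQ\rightsquigarrow_UP'Q$ if $P\rightsquigarrow_UP'$; $PQ\rightsquigarrow_UPQ'$ if $Q\rightsquigarrow_UQ'$. A head normal form is a term $\lambda x_1\dots x_n.xM_1\dots M_p$ ($n,p\ge0$). Partial $\lambda$-terms: $P::=\Omega\mid x\mid PP\mid\lambda x.P$. The partial normal form $\omega(M)$ is $\Omega$ if $M$ is not a head normal form, and $\lambda\vec x.x\,\omega(M_1)\dots\omega(M_p)$ if $M=\lambda\vec x.xM_1\dots M_p$. *)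

theory Defs
  imports Main
begin

(* Pure lambda-terms, with de Bruijn indices (terms are thus identified up to alpha) *)
datatype trm = Var nat | Lam trm | App trm trm

fun lift :: "trm \<Rightarrow> nat \<Rightarrow> trm" where
  "lift (Var i) k = (if i < k then Var i else Var (Suc i))"
| "lift (Lam t) k = Lam (lift t (Suc k))"
| "lift (App t u) k = App (lift t k) (lift u k)"

fun subst :: "trm \<Rightarrow> nat \<Rightarrow> trm \<Rightarrow> trm" where
  "subst (Var i) k s = (if k < i then Var (i - 1) else if i = k then s else Var i)"
| "subst (Lam t) k s = Lam (subst t (Suc k) (lift s 0))"
| "subst (App t u) k s = App (subst t k s) (subst u k s)"

inductive beta :: "trm \<Rightarrow> trm \<Rightarrow> bool" (infixl "\<rightarrow>\<^sub>\<beta>" 50) where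
  beta_root: "App (Lam t) s \<rightarrow>\<^sub>\<beta> subst t 0 s"
| beta_appL: "t \<rightarrow>\<^sub>\<beta> t' \<Longrightarrow> App t u \<rightarrow>\<^sub>\<beta> App t' u"
| beta_appR: "u \<rightarrow>\<^sub>\<beta> u' \<Longrightarrow> App t u \<rightarrow>\<^sub>\<beta> App t u'"
| beta_lam: "t \<rightarrow>\<^sub>\<beta> t' \<Longrightarrow> Lam t \<rightarrow>\<^sub>\<beta> Lam t'"

inductive hred :: "trm \<Rightarrow> trm \<Rightarrow> bool" (infixl "\<rightarrow>\<^sub>h" 50) where
  hred_root: "App (Lam t) s \<rightarrow>\<^sub>h subst t 0 s"
| hred_lam: "t \<rightarrow>\<^sub>h t' \<Longrightarrow> Lam t \<rightarrow>\<^sub>h Lam t'"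
| hred_appL: "t \<rightarrow>\<^sub>h t' \<Longrightarrow> App t u \<rightarrow>\<^sub>h App t' u"

definition hnormal :: "trm \<Rightarrow> bool" where
  "hnormal M \<longleftrightarrow> \<not> (\<exists>M'. M \<rightarrow>\<^sub>h M')"

inductive ured :: "trm \<Rightarrow> trm \<Rightarrow> bool" (infixl "\<leadsto>\<^sub>U" 50) where
  ured_head: "M \<rightarrow>\<^sub>h M' \<Longrightarrow> M \<leadsto>\<^sub>U M'"
| ured_lam: "hnormal (Lam P) \<Longrightarrow> P \<leadsto>\<^sub>U P' \<Longrightarrow> Lam P \<leadsto>\<^sub>U Lam P'"
| ured_appL: "hnormal (App P Q) \<Longrightarrow> P \<leadsto>\<^sub>U P' \<Longrightarrow> App P Q \<leadsto>\<^sub>U App P' Q"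
| ured_appR: "hnormal (App P Q) \<Longrightarrow> Q \<leadsto>\<^sub>U Q' \<Longrightarrow> App P Q \<leadsto>\<^sub>U App P Q'"

inductive var_app :: "trm \<Rightarrow> bool" where
  "var_app (Var x)"
| "var_app M \<Longrightarrow> var_app (App M N)"

inductive hnf :: "trm \<Rightarrow> bool" where
  "var_app M \<Longrightarrow> hnf M"
| "hnf M \<Longrightarrow> hnf (Lam M)"

datatype ptrm = POmega | PVar nat | PLam ptrm | PApp ptrm ptrm

fun pnf :: "trm \<Rightarrow> ptrm" where
  "pnf (Var x) = PVar x"
| "pnf (Lam M) = (if hnf (Lam M) then PLam (pnf M) else POmega)"
| "pnf (App M N) = (if hnf (App M N) then PApp (pnf M) (pnf N) else POmega)"

end

theory Submission
  imports Defs
begin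
lemma var_app_nohred: "var_app M \<Longrightarrow> \<not> (M \<rightarrow>\<^sub>h M')"
proof (induction M arbitrary: M' rule: var_app.induct)
  case (1 x) then show ?case by (auto elim: hred.cases)
next
  case (2 M N) show ?case
  proof
    assume "App M N \<rightarrow>\<^sub>h M'"
    then show False
    proof cases
      case (hred_root t) then show ?thesis using 2(1) by (auto elim: var_app.cases)
    next
      case (hred_appL t') then show ?thesis using 2(2) by blast
    qed
  qed
qed

lemma hnf_nohred: "hnf M \<Longrightarrow> \<not> (M \<rightarrow>\<^sub>h M')"
proof (induction M arbitrary: M' rule: hnf.induct)
  case (1 M) then show ?case using var_app_nohred by blast
next
  case (2 M) show ?case
  proof
    assume "Lam M \<rightarrow>\<^sub>h M'"
    then show False
    proof cases
      case (hred_lam t') then show ?thesis using 2(2) by blast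
    qed
  qed
qed

lemma hnf_hnormal: "hnf M \<Longrightarrow> hnormal M"
  unfolding hnormal_def using hnf_nohred by blast

lemma var_app_beta: "var_app M \<Longrightarrow> M \<rightarrow>\<^sub>\<beta> M' \<Longrightarrow> var_app M'"
proof (induction M arbitrary: M' rule: var_app.induct)
  case (1 x) then show ?case by (auto elim: beta.cases)
next
  case (2 M N)
  from 2(3) show ?case
  proof cases
    case (beta_root t) then show ?thesis using 2(1) by (auto elim: var_app.cases)
  next
    case (beta_appL t') then show ?thesis using 2 by (simp add: var_app.intros)
  next
    case (beta_appR u') then show ?thesis using 2 by (simp add: var_app.intros)
  qed
qed

lemma hnf_beta: "hnf M \<Longrightarrow> M \<rightarrow>\<^sub>\<beta> M' \<Longrightarrow> hnf M'"
proof (induction M arbitrary: M' rule: hnf.induct)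
  case (1 M) then show ?case using var_app_beta hnf.intros(1) by blast
next
  case (2 M) from 2(3) show ?case
  proof cases
    case (beta_lam t') then show ?thesis using 2 by (simp add: hnf.intros)
  qed
qed

lemma var_app_Lam: "\<not> var_app (Lam t)"
  by (auto elim: var_app.cases)

lemma hnf_App: "hnf (App t u) \<longleftrightarrow> var_app t"
proof
  assume "hnf (App t u)" then show "var_app t"
    by cases (auto elim: var_app.cases)
next
  assume "var_app t" then show "hnf (App t u)" by (simp add: hnf.intros var_app.intros)
qed

lemma hnf_Lam: "hnf (Lam t) \<longleftrightarrow> hnf t"
proof
  assume "hnf (Lam t)" then show "hnf t"
    by cases (auto simp: var_app_Lam)
next
  assume "hnf t" then show "hnf (Lam t)" by (simp add: hnf.intros)
qed

lemma var_app_hnf: "var_app t \<Longrightarrow> hnf t"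
  by (rule hnf.intros)

lemma lemA: "M \<rightarrow>\<^sub>\<beta> M' \<Longrightarrow> \<not> hnf M \<Longrightarrow> \<not> (M \<rightarrow>\<^sub>h M') \<Longrightarrow> \<not> hnf M'"
proof (induction rule: beta.induct)
  case (beta_root t s) then show ?case using hred_root by blast
next
  case (beta_appL t t' u)
  show ?case
  proof (cases "\<exists>a. t = Lam a")
    case True
    then obtain a where a: "t = Lam a" by blast
    from beta_appL(1) a obtain a' where "t' = Lam a'" by cases auto
    then show ?thesis by (simp add: hnf_App var_app_Lam)
  next
    case False
    have "\<not> var_app t" using beta_appL(3) hnf_App by blast
    have "\<not> hnf t"
    proof
      assume "hnf t" then show False using False \<open>\<not> var_app t\<close> by cases auto
    qed
    moreover have "\<not> (t \<rightarrow>\<^sub>h t')" using beta_appL(4) hred_appL by blast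
    ultimately have "\<not> hnf t'" using beta_appL(2) by blast
    then show ?thesis using hnf_App var_app_hnf by blast
  qed
next
  case (beta_appR u u' t)
  then show ?case by (simp add: hnf_App)
next
  case (beta_lam t t')
  then show ?case using hred_lam hnf_Lam by blast
qed

theorem mainTheorem16:
  assumes "M \<rightarrow>\<^sub>\<beta> M'"
    and "\<not> (M \<leadsto>\<^sub>U M')"
  shows "pnf M = pnf M'"
  using assms
proof (induction rule: beta.induct)
  case (beta_root t s) then show ?case using hred_root ured_head by blast
next
  case (beta_appL t t' u)
  show ?case
  proof (cases "hnf (App t u)")
    case True
    then have hn: "hnormal (App t u)" by (rule hnf_hnormal)
    have "\<not> t \<leadsto>\<^sub>U t'" using beta_appL(3) ured_appL[OF hn] by blast
    then have "pnf t = pnf t'" using beta_appL(2) by blast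
    moreover have "hnf (App t' u)" using hnf_beta[OF True] beta_appL(1) beta.beta_appL by blast
    ultimately show ?thesis using True by (simp del: pnf.simps add: pnf.simps(3))
  next
    case False
    have "\<not> hnf (App t' u)"
    proof
      assume "hnf (App t' u)"
      then have "App t u \<rightarrow>\<^sub>h App t' u"
        using lemA[OF beta.beta_appL[OF beta_appL(1)] False] by blast
      then show False using beta_appL(3) ured_head by blast
    qed
    then show ?thesis using False by simp
  qed
next
  case (beta_appR u u' t)
  show ?case
  proof (cases "hnf (App t u)")
    case True
    then have hn: "hnormal (App t u)" by (rule hnf_hnormal)
    have "\<not> u \<leadsto>\<^sub>U u'" using beta_appR(3) ured_appR[OF hn] by blast
    then have "pnf u = pnf u'" using beta_appR(2) by blast
    moreover have "hnf (App t u')" using True by (simp add: hnf_App)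
    ultimately show ?thesis using True by (simp del: pnf.simps add: pnf.simps(3))
  next
    case False
    then have "\<not> hnf (App t u')" by (simp add: hnf_App)
    then show ?thesis using False by simp
  qed
next
  case (beta_lam t t')
  show ?case
  proof (cases "hnf (Lam t)")
    case True
    then have hn: "hnormal (Lam t)" by (rule hnf_hnormal)
    have "\<not> t \<leadsto>\<^sub>U t'" using beta_lam(3) ured_lam[OF hn] by blast
    then have "pnf t = pnf t'" using beta_lam(2) by blast
    moreover have "hnf (Lam t')" using hnf_beta[OF True] beta_lam(1) beta.beta_lam by blast
    ultimately show ?thesis using True by (simp del: pnf.simps add: pnf.simps(2))
  next
    case False
    have "\<not> hnf (Lam t')"
    proof
      assume "hnf (Lam t')"
      then have "Lam t \<rightarrow>\<^sub>h Lam t'"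
        using lemA[OF beta.beta_lam[OF beta_lam(1)] False] by blast
      then show False using beta_lam(3) ured_head by blast
    qed
    then show ?thesis using False by simp
  qed
qed
end
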